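(* Let $n\ge1$, $R>0$, and let $\omega\subset\mathbb{R}^n$ be a measurable set with $|\omega\cap B(0,R)|>0$. Then for every complex polynomial $P\in\mathbb{C}[X_1,\dots,X_n]$ of degree $d$, $$\|P\|_{L^2(B(0,R))}\le\frac{2^{2d+1}}{\sqrt3}\sqrt{\frac{4|B(0,R)|}{|\omega\cap B(0,R)|}}\left(\frac{1+\big(1-\frac{|\omega\cap B(0,R)|}{4|B(0,R)|}\big)^{1/n}}{1-\big(1-\frac{|\omega\cap B(0,R)|}{4|B(0,R)|}\big)^{1/n}}\right)^{d}\|P\|_{L^2(\omega\cap B(0,R))}.$$
   Context: $B(0,R)$ is the open Euclidean ball in $\mathbb{R}^n$ of radius $R$ centered at $0$ and $|\cdot|$ denotes Lebesgue measure. *)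

theory Defs
  imports "HOL-Analysis.Analysis"
begin

text \<open>Complex polynomials in n real variables, represented by their coefficient
  function on multi-indices (alpha :: 'n => nat), required to have finite support.\<close>

definition mpoly_support :: "(('n::finite \<Rightarrow> nat) \<Rightarrow> complex) \<Rightarrow> ('n \<Rightarrow> nat) set" where
  "mpoly_support c = {\<alpha>. c \<alpha> \<noteq> 0}"

definition mpoly_eval :: "(('n::finite \<Rightarrow> nat) \<Rightarrow> complex) \<Rightarrow> real^'n \<Rightarrow> complex" where
  "mpoly_eval c x = (\<Sum>\<alpha>\<in>mpoly_support c. c \<alpha> * (\<Prod>i\<in>UNIV. complex_of_real (x $ i) ^ \<alpha> i))"

definition mpoly_degree :: "(('n::finite \<Rightarrow> nat) \<Rightarrow> complex) \<Rightarrow> nat" where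
  "mpoly_degree c = Max ((\<lambda>\<alpha>. \<Sum>i\<in>UNIV. \<alpha> i) ` mpoly_support c)"

definition L2_norm_on :: "'a::euclidean_space set \<Rightarrow> ('a \<Rightarrow> complex) \<Rightarrow> real" where
  "L2_norm_on A f = sqrt (LINT x:A|lebesgue. (cmod (f x))\<^sup>2)"

end

theory Submission
  imports Defs "HOL-Computational_Algebra.Polynomial"
begin

lemma lagrange_interp:
  fixes q :: "complex poly" and s :: "nat \<Rightarrow> complex"
  assumes "degree q \<le> d" "inj_on s {..d}"
  shows "poly q z = (\<Sum>i\<le>d. poly q (s i) * (\<Prod>j\<in>{..d}-{i}. (z - s j)/(s i - s j)))"
proof -
  define L where "L = (\<Sum>i\<le>d. smult (poly q (s i)) (\<Prod>j\<in>{..d}-{i}. smult (1/(s i - s j)) [:- s j, 1:]))"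
  have polyL: "poly L w = (\<Sum>i\<le>d. poly q (s i) * (\<Prod>j\<in>{..d}-{i}. (w - s j)/(s i - s j)))" for w
    unfolding L_def by (simp add: poly_sum poly_prod diff_divide_distrib)
  have degL: "degree L \<le> d"
    unfolding L_def
  proof (rule degree_sum_le)
    fix i assume "i \<in> {..d}"
    have "degree (\<Prod>j\<in>{..d}-{i}. smult (1/(s i - s j)) [:- s j, 1:]) \<le> (\<Sum>j\<in>{..d}-{i}. degree (smult (1/(s i - s j)) [:- s j, (1::complex):]))"
      using degree_prod_sum_le[of "{..d}-{i}" "\<lambda>j. smult (1/(s i - s j)) [:- s j, 1:]"] by (simp only: o_def finite_Diff finite_atMost)
    also have "\<dots> \<le> (\<Sum>j\<in>{..d}-{i}. 1)"
      by (intro sum_mono order_trans[OF degree_smult_le]) simp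
    also have "\<dots> \<le> d" using \<open>i \<in> {..d}\<close> by simp
    finally show "degree (smult (poly q (s i)) (\<Prod>j\<in>{..d}-{i}. smult (1/(s i - s j)) [:- s j, 1:])) \<le> d"
      using degree_smult_le order_trans by blast
  qed simp
  have "q = L"
  proof (rule poly_eqI_degree[where A = "s ` {..d}"])
    fix x assume "x \<in> s ` {..d}"
    then obtain l where l: "l \<le> d" "x = s l" by auto
    have "poly L x = (\<Sum>i\<le>d. if i = l then poly q (s l) else 0)"
      unfolding polyL l(2)
    proof (rule sum.cong[OF refl])
      fix i assume i: "i \<in> {..d}"
      show "poly q (s i) * (\<Prod>j\<in>{..d}-{i}. (s l - s j)/(s i - s j)) = (if i = l then poly q (s l) else 0)"
      proof (cases "i = l")
        case True
        have "(\<Prod>j\<in>{..d}-{i}. (s l - s j)/(s i - s j)) = (\<Prod>j\<in>{..d}-{i}. 1)"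
        proof (rule prod.cong[OF refl])
          fix j assume "j \<in> {..d}-{i}"
          then have "s i \<noteq> s j" using assms(2) i unfolding inj_on_def by blast
          then show "(s l - s j)/(s i - s j) = 1" using True by simp
        qed
        then show ?thesis using True by simp
      next
        case False
        have "(\<Prod>j\<in>{..d}-{i}. (s l - s j)/(s i - s j)) = 0"
          by (rule prod_zero) (use False l in \<open>auto intro!: bexI[of _ l]\<close>)
        then show ?thesis using False by simp
      qed
    qed
    also have "\<dots> = poly q x" using l by simp
    finally show "poly q x = poly L x" by simp
  next
    have "card (s ` {..d}) = d + 1" using assms(2) by (simp add: card_image)
    then show "card (s ` {..d}) > degree q" "card (s ` {..d}) > degree L"
      using assms(1) degL by auto
  qed
  then have "poly q z = poly L z" by (rule arg_cong)
  also note polyL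
  finally show ?thesis .
qed

lemma gap_mono:
  fixes k :: "nat \<Rightarrow> nat"
  assumes "\<And>i j. i < j \<Longrightarrow> j \<le> d \<Longrightarrow> k i < k j" "i \<le> j" "j \<le> d"
  shows "j - i \<le> k j - k i"
  using assms(2,3)
proof (induction j)
  case 0 then show ?case by simp
next
  case (Suc j)
  show ?case
  proof (cases "i = Suc j")
    case True then show ?thesis by simp
  next
    case False
    then have "i \<le> j" using Suc by simp
    then have "j - i \<le> k j - k i" using Suc by simp
    moreover have "k j < k (Suc j)" using assms(1) Suc by simp
    moreover have "k i \<le> k j"
      using assms(1)[of i j] \<open>i \<le> j\<close> Suc by (cases "i = j") auto
    ultimately show ?thesis by linarith
  qed
qed

lemma one_minus_pow_bound:
  fixes \<eta> :: real
  assumes "0 < \<eta>" "\<eta> < 1" "1 \<le> m"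
  shows "1 / (1 - (1-\<eta>)^m) \<le> (1 + m*\<eta>) / (m*\<eta>)"
proof -
  have mpos: "0 < real m * \<eta>" using assms by simp
  have b: "1 + m*\<eta> \<le> (1+\<eta>)^m" using Bernoulli_inequality[of \<eta> m] assms by simp
  have "(1-\<eta>)^m * (1+\<eta>)^m = (1 - \<eta>^2)^m" by (simp add: power_mult_distrib[symmetric] power2_eq_square algebra_simps)
  also have "\<dots> \<le> 1" using assms by (intro power_le_one) (auto simp: power2_eq_square mult_nonneg_nonneg mult_le_one)
  finally have c: "(1-\<eta>)^m * (1+\<eta>)^m \<le> 1" .
  have p0: "0 \<le> (1-\<eta>)^m" using assms by simp
  have "(1-\<eta>)^m * (1 + m*\<eta>) \<le> 1"
    using c mult_left_mono[OF b p0] by linarith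
  moreover have pos: "0 < 1 + m*\<eta>" using mpos by simp
  ultimately have "(1-\<eta>)^m \<le> 1/(1+m*\<eta>)" by (simp add: pos_le_divide_eq)
  then have le: "m*\<eta>/(1+m*\<eta>) \<le> 1 - (1-\<eta>)^m" using pos by (simp add: field_simps)
  have gt: "0 < m*\<eta>/(1+m*\<eta>)" using mpos pos by simp
  have "1 / (1 - (1-\<eta>)^m) \<le> 1 / (m*\<eta>/(1+m*\<eta>))"
    proof (rule divide_left_mono[OF le])
    have "0 < 1 - (1-\<eta>)^m" using gt le by linarith
    then have "0 < (1 - (1-\<eta>)^m) * (m*\<eta>/(1+m*\<eta>))" using gt by (rule mult_pos_pos)
    then show "0 < (1 - (1-\<eta>)^m) * (m*\<eta>/(1+m*\<eta>))" .
  qed simp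
  also have "\<dots> = (1 + m*\<eta>) / (m*\<eta>)" using mpos pos by simp
  finally show ?thesis .
qed

lemma prod_dist:
  assumes "i \<le> d"
  shows "(\<Prod>j\<in>{..d}-{i}. real (if j < i then i - j else j - i)) = fact i * fact (d - i)"
proof -
  have split: "{..d}-{i} = {..<i} \<union> {i<..d}" using assms by auto
  have "(\<Prod>j\<in>{..d}-{i}. real (if j < i then i - j else j - i))
      = (\<Prod>j\<in>{..<i}. real (if j < i then i - j else j - i)) * (\<Prod>j\<in>{i<..d}. real (if j < i then i - j else j - i))"
    unfolding split by (rule prod.union_disjoint) auto
  also have "(\<Prod>j\<in>{..<i}. real (if j < i then i - j else j - i)) = (\<Prod>j\<in>{0..<i}. real (i - j))"
    by (rule prod.cong) auto
  also have "\<dots> = fact i" by (simp add: fact_prod_rev of_nat_prod)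
  also have "(\<Prod>j\<in>{i<..d}. real (if j < i then i - j else j - i)) = (\<Prod>j\<in>{i<..d}. real (j - i))"
    by (rule prod.cong) auto
  also have "\<dots> = (\<Prod>l\<in>{0..<d-i}. real (Suc l))"
    by (rule prod.reindex_bij_witness[of _ "\<lambda>l. l + Suc i" "\<lambda>j. j - Suc i"]) auto
  also have "\<dots> = fact (d - i)" by (simp add: fact_prod_Suc of_nat_prod)
  finally show ?thesis .
qed

lemma sum_inv_fact: "(\<Sum>i\<le>d. 1/(fact i * fact (d-i)) :: real) = 2^d / fact d"
proof -
  have "(\<Sum>i\<le>d. 1/(fact i * fact (d-i)) :: real) = (\<Sum>i\<le>d. real (d choose i) / fact d)"
  proof (rule sum.cong[OF refl])
    fix i assume "i \<in> {..d}"
    then have "real (d choose i) = fact d / (fact i * fact (d - i))" by (simp add: binomial_fact)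
    then show "1/(fact i * fact (d-i)) = real (d choose i) / fact d" by (simp add: field_simps)
  qed
  also have "\<dots> = real (\<Sum>i\<le>d. d choose i) / fact d" by (simp add: sum_divide_distrib)
  also have "\<dots> = 2^d / fact d" by (simp add: choose_row_sum)
  finally show ?thesis .
qed

lemma pow_fact: "real (d+1)^d \<le> 3^d * fact d"
proof (induction d)
  case 0 then show ?case by simp
next
  case (Suc d)
  have e: "(1 + 1 / real (Suc d)) ^ Suc d \<le> 3"
    using exp_ge_one_plus_x_over_n_power_n[of "Suc d" 1] exp_le by simp
  have "real (Suc d + 1) ^ Suc d = (1 + 1 / real (Suc d)) ^ Suc d * real (Suc d) ^ Suc d"
  proof -
    have "(1 + 1/real (Suc d)) * real (Suc d) = real (Suc d + 1)" by (simp add: field_simps)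
    then show ?thesis by (metis power_mult_distrib)
  qed
  also have "\<dots> \<le> 3 * real (Suc d) ^ Suc d"
    by (rule mult_right_mono[OF e]) simp
  also have "real (Suc d) ^ Suc d = real (Suc d) * real (d+1)^d" by simp
  also have "3 * (real (Suc d) * real (d+1)^d) \<le> 3 * (real (Suc d) * (3^d * fact d))"
    using Suc.IH by (intro mult_left_mono) auto
  also have "\<dots> = 3 ^ Suc d * fact (Suc d)" by (simp add: algebra_simps)
  finally show ?case .
qed

lemma ratio_bound:
  fixes r :: real
  assumes "0 < r" "r < 1" "a + m \<le> b" "1 \<le> m"
  shows "r^a/(r^a - r^b) \<le> 1/(1 - r^m)" and "r^b/(r^a - r^b) \<le> 1/(1 - r^m)"
proof -
  have rb: "r^b = r^a * r^(b-a)" using assms by (simp add: power_add[symmetric])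
  have "r^(b-a) \<le> r^m" using assms by (intro power_decreasing) auto
  moreover have "r^m < 1" using assms by (simp add: power_less_one_iff)
  ultimately have pos: "0 < 1 - r^(b-a)" "1 - r^m \<le> 1 - r^(b-a)" by auto
  have ra: "0 < r^a" using assms by simp
  have "r^a - r^b = r^a * (1 - r^(b-a))" unfolding rb by (simp add: algebra_simps)
  moreover have "r^a \<noteq> 0" "1 - r^(b-a) \<noteq> 0" using ra pos(1) by linarith+
  ultimately have "r^a/(r^a - r^b) = 1/(1 - r^(b-a))" by (simp del: power_eq_0_iff)
  also have "\<dots> \<le> 1/(1 - r^m)" using pos \<open>r^m < 1\<close> by (intro divide_left_mono) auto
  finally show 1: "r^a/(r^a - r^b) \<le> 1/(1 - r^m)" .
  have "r^b \<le> r^a" using assms by (intro power_decreasing) auto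
  moreover have "0 < r^a - r^b" using assms by (intro power_strict_decreasing[THEN diff_gt_0_iff_gt[THEN iffD2]]) auto
  ultimately have "r^b/(r^a - r^b) \<le> r^a/(r^a - r^b)" by (intro divide_right_mono) auto
  then show "r^b/(r^a - r^b) \<le> 1/(1 - r^m)" using 1 by linarith
qed

lemma factor_bound:
  fixes \<eta> :: real and k :: "nat \<Rightarrow> nat"
  assumes eta: "0 < \<eta>" "\<eta> \<le> 2/3" "real d * \<eta> \<le> 2/3"
    and kmono: "\<And>i j. i < j \<Longrightarrow> j \<le> d \<Longrightarrow> k i < k j"
    and ij: "i \<le> d" "j \<le> d" "i \<noteq> j"
  shows "cmod ((0 - complex_of_real ((1-\<eta>)^k j)) / (complex_of_real ((1-\<eta>)^k i) - complex_of_real ((1-\<eta>)^k j)))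
          \<le> (5/3) / (\<eta> * real (if j < i then i - j else j - i))"
proof -
  define r where "r = 1 - \<eta>"
  define m where "m = (if j < i then i - j else j - i)"
  have r: "0 < r" "r < 1" using eta unfolding r_def by auto
  have m1: "1 \<le> m" using ij unfolding m_def by auto
  have md: "m \<le> d" using ij unfolding m_def by auto
  have "(0 - complex_of_real (r^k j)) / (complex_of_real (r^k i) - complex_of_real (r^k j))
        = complex_of_real (- (r^k j) / (r^k i - r^k j))" by simp
  then have "cmod ((0 - complex_of_real (r^k j)) / (complex_of_real (r^k i) - complex_of_real (r^k j)))
        = \<bar>r^k j / (r^k i - r^k j)\<bar>" by (simp only: norm_of_real)
  also have "\<dots> \<le> 1/(1 - r^m)"
  proof (cases "j < i")
    case True
    then have "k j + m \<le> k i" using gap_mono[of d k j i] kmono ij unfolding m_def by auto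
    then have "r^k j/(r^k j - r^k i) \<le> 1/(1 - r^m)" using ratio_bound(1)[OF r _ m1] by blast
    moreover have "r^k i < r^k j" using kmono[OF True] ij r by (intro power_strict_decreasing) auto
    moreover have "\<bar>r^k j / (r^k i - r^k j)\<bar> = r^k j/(r^k j - r^k i)"
      using \<open>r^k i < r^k j\<close> r by (simp add: abs_divide abs_minus_commute)
    ultimately show ?thesis by simp
  next
    case False
    then have lt: "i < j" using ij by auto
    then have "k i + m \<le> k j" using gap_mono[of d k i j] kmono ij False unfolding m_def by auto
    then have "r^k j/(r^k i - r^k j) \<le> 1/(1 - r^m)" using ratio_bound(2)[OF r _ m1] by blast
    moreover have "r^k j < r^k i" using kmono[OF lt] ij r by (intro power_strict_decreasing) auto
    ultimately show ?thesis using r by simp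
  qed
  also have "\<dots> \<le> (1 + m*\<eta>)/(m*\<eta>)" unfolding r_def using one_minus_pow_bound[of \<eta> m] eta m1 by auto
  also have "\<dots> \<le> (5/3)/(m*\<eta>)"
  proof (rule divide_right_mono)
    have "real m * \<eta> \<le> real d * \<eta>" using md eta by (intro mult_right_mono) auto
    then show "1 + m*\<eta> \<le> 5/3" using eta by linarith
  qed (use eta m1 in simp)
  finally show ?thesis unfolding r_def m_def by (simp add: mult.commute)
qed

lemma lagrange_bound:
  fixes q :: "complex poly" and k :: "nat \<Rightarrow> nat" and \<eta> T :: real
  assumes deg: "degree q \<le> d" and eta: "0 < \<eta>" "\<eta> \<le> 2/3" "real d * \<eta> \<le> 2/3"
    and kmono: "\<And>i j. i < j \<Longrightarrow> j \<le> d \<Longrightarrow> k i < k j"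
    and bnd: "\<And>i. i \<le> d \<Longrightarrow> cmod (poly q (of_real ((1-\<eta>)^(k i)))) \<le> T"
  shows "cmod (poly q 0) \<le> T * (10/(3*\<eta>))^d / fact d"
proof -
  define s where "s i = complex_of_real ((1-\<eta>)^(k i))" for i
  define W where "W i = (\<Prod>j\<in>{..d}-{i}. (5/3) / (\<eta> * real (if j < i then i - j else j - i)))" for i
  have T0: "0 \<le> T" using bnd[of 0] by (meson norm_ge_zero order_trans le0)
  have inj: "inj_on s {..d}"
  proof (rule inj_onI)
    fix i j assume ij: "i \<in> {..d}" "j \<in> {..d}" "s i = s j"
    have eqr: "(1-\<eta>)^(k i) = (1-\<eta>)^(k j)" using ij(3) unfolding s_def by (simp only: of_real_eq_iff)
    show "i = j"
    proof (rule ccontr)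
      assume "i \<noteq> j"
      then consider "i < j" | "j < i" by linarith
      then show False
      proof cases
        case 1
        then have "(1-\<eta>)^(k j) < (1-\<eta>)^(k i)" using kmono[OF 1] ij eta by (intro power_strict_decreasing) auto
        then show False using eqr by simp
      next
        case 2
        then have "(1-\<eta>)^(k i) < (1-\<eta>)^(k j)" using kmono[OF 2] ij eta by (intro power_strict_decreasing) auto
        then show False using eqr by simp
      qed
    qed
  qed
  have "poly q 0 = (\<Sum>i\<le>d. poly q (s i) * (\<Prod>j\<in>{..d}-{i}. (0 - s j)/(s i - s j)))"
    by (rule lagrange_interp[OF deg inj])
  then have "cmod (poly q 0) \<le> (\<Sum>i\<le>d. cmod (poly q (s i) * (\<Prod>j\<in>{..d}-{i}. (0 - s j)/(s i - s j))))"
    by (simp add: norm_sum)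
  also have "\<dots> \<le> (\<Sum>i\<le>d. T * W i)"
  proof (rule sum_mono)
    fix i assume i: "i \<in> {..d}"
    have "cmod (\<Prod>j\<in>{..d}-{i}. (0 - s j)/(s i - s j)) = (\<Prod>j\<in>{..d}-{i}. cmod ((0 - s j)/(s i - s j)))"
      by (rule prod_norm[symmetric])
    also have "\<dots> \<le> W i" unfolding W_def
    proof (rule prod_mono)
      fix j assume j: "j \<in> {..d}-{i}"
      show "0 \<le> cmod ((0 - s j)/(s i - s j)) \<and> cmod ((0 - s j)/(s i - s j)) \<le> (5/3) / (\<eta> * real (if j < i then i - j else j - i))"
        using factor_bound[OF eta kmono, where i=i and j=j] i j unfolding s_def by auto
    qed
    finally have "cmod (\<Prod>j\<in>{..d}-{i}. (0 - s j)/(s i - s j)) \<le> W i" .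
    moreover have "cmod (poly q (s i)) \<le> T" using bnd i unfolding s_def by auto
    ultimately show "cmod (poly q (s i) * (\<Prod>j\<in>{..d}-{i}. (0 - s j)/(s i - s j))) \<le> T * W i"
      by (simp add: norm_mult mult_mono' T0)
  qed
  also have "\<dots> = (\<Sum>i\<le>d. T * ((5/(3*\<eta>))^d * (1/(fact i * fact (d-i)))))"
  proof (rule sum.cong[OF refl])
    fix i assume i: "i \<in> {..d}"
    have "W i = (\<Prod>j\<in>{..d}-{i}. (5/(3*\<eta>)) / real (if j < i then i - j else j - i))"
      unfolding W_def by (rule prod.cong[OF refl]) (simp add: divide_divide_eq_left mult_ac)
    also have "\<dots> = (\<Prod>j\<in>{..d}-{i}. (5/(3*\<eta>))) / (\<Prod>j\<in>{..d}-{i}. real (if j < i then i - j else j - i))"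
      by (rule prod_dividef)
    also have "\<dots> = (5/(3*\<eta>))^d / (fact i * fact (d-i))"
      using i by (simp add: prod_dist)
    finally show "T * W i = T * ((5/(3*\<eta>))^d * (1/(fact i * fact (d-i))))" by simp
  qed
  also have "\<dots> = T * (5/(3*\<eta>))^d * (\<Sum>i\<le>d. 1/(fact i * fact (d-i)))"
    by (simp add: sum_distrib_left mult.assoc)
  also have "\<dots> = T * (5/(3*\<eta>))^d * (2^d / fact d)" by (simp add: sum_inv_fact)
  also have "\<dots> = T * ((5/(3*\<eta>))^d * 2^d) / fact d" by simp
  also have "(5/(3*\<eta>))^d * 2^d = (10/(3*\<eta>))^d"
    by (simp add: power_mult_distrib[symmetric])
  finally show ?thesis by simp
qed

lemma restrict_poly:
  fixes c :: "('n::finite \<Rightarrow> nat) \<Rightarrow> complex" and x0 v :: "real^'n"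
  assumes fin: "finite (mpoly_support c)" and degc: "\<And>\<alpha>. \<alpha> \<in> mpoly_support c \<Longrightarrow> (\<Sum>i\<in>UNIV. \<alpha> i) \<le> d"
  shows "\<exists>q. degree q \<le> d \<and> (\<forall>s::real. poly q (of_real s) = mpoly_eval c (x0 + s *\<^sub>R v))"
proof -
  define q where "q = (\<Sum>\<alpha>\<in>mpoly_support c. smult (c \<alpha>) (\<Prod>i\<in>UNIV. [:complex_of_real (x0$i), complex_of_real (v$i):]^(\<alpha> i)))"
  have "degree q \<le> d" unfolding q_def
  proof (rule degree_sum_le[OF fin])
    fix \<alpha> assume a: "\<alpha> \<in> mpoly_support c"
    have "degree (\<Prod>i\<in>UNIV. [:complex_of_real (x0$i), complex_of_real (v$i):]^(\<alpha> i))
        \<le> (\<Sum>i\<in>UNIV. degree ([:complex_of_real (x0$i), complex_of_real (v$i):]^(\<alpha> i)))"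
      using degree_prod_sum_le[of "UNIV::'n set" "\<lambda>i. [:complex_of_real (x0$i), complex_of_real (v$i):]^(\<alpha> i)"]
      by (simp only: o_def finite)
    also have "\<dots> \<le> (\<Sum>i\<in>UNIV. \<alpha> i)"
    proof (rule sum_mono)
      fix i :: 'n
      have "degree ([:complex_of_real (x0$i), complex_of_real (v$i):]^(\<alpha> i)) \<le> degree [:complex_of_real (x0$i), complex_of_real (v$i):] * \<alpha> i"
        by (rule degree_power_le)
      also have "\<dots> \<le> 1 * \<alpha> i" by (intro mult_right_mono) auto
      finally show "degree ([:complex_of_real (x0$i), complex_of_real (v$i):]^(\<alpha> i)) \<le> \<alpha> i" by simp
    qed
    also have "\<dots> \<le> d" using degc a .
    finally show "degree (smult (c \<alpha>) (\<Prod>i\<in>UNIV. [:complex_of_real (x0$i), complex_of_real (v$i):]^(\<alpha> i))) \<le> d"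
      using degree_smult_le order_trans by blast
  qed
  moreover have "poly q (of_real s) = mpoly_eval c (x0 + s *\<^sub>R v)" for s :: real
    unfolding q_def mpoly_eval_def by (simp add: poly_sum poly_prod algebra_simps)
  ultimately show ?thesis by blast
qed

definition hom :: "'a::real_vector \<Rightarrow> real \<Rightarrow> 'a \<Rightarrow> 'a" where
  "hom x0 s y = s *\<^sub>R y + (1-s) *\<^sub>R x0"

lemma hom_comp: "hom x0 a (hom x0 b y) = hom x0 (a*b) y"
  unfolding hom_def by (simp add: algebra_simps)

lemma hom_1[simp]: "hom x0 1 y = y" unfolding hom_def by simp

lemma hom_alt: "hom x0 s y = x0 + s *\<^sub>R (y - x0)"
  unfolding hom_def by (simp add: algebra_simps)

lemma hom_inj: "s \<noteq> 0 \<Longrightarrow> inj (hom x0 s)"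
  unfolding hom_def by (rule injI) simp

lemma hom_image_vimage:
  assumes "s \<noteq> 0" shows "hom x0 s ` S = hom x0 (1/s) -` S"
proof
  show "hom x0 s ` S \<subseteq> hom x0 (1/s) -` S"
    using assms by (auto simp: hom_comp)
  show "hom x0 (1/s) -` S \<subseteq> hom x0 s ` S"
  proof
    fix x assume "x \<in> hom x0 (1/s) -` S"
    then have "hom x0 (1/s) x \<in> S" by simp
    moreover have "x = hom x0 s (hom x0 (1/s) x)" using assms by (simp add: hom_comp)
    ultimately show "x \<in> hom x0 s ` S" by blast
  qed
qed

lemma hom_meas:
  fixes x0 :: "'a::euclidean_space"
  assumes "s \<noteq> 0" shows "hom x0 s \<in> lebesgue \<rightarrow>\<^sub>M lebesgue"
proof -
  have "(\<lambda>x. (1-s) *\<^sub>R x0 + (\<Sum>j\<in>Basis. (s * (x \<bullet> j)) *\<^sub>R j)) = hom x0 s"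
    unfolding hom_def scaleR_scaleR[symmetric] scaleR_sum_right[symmetric]
    by (auto simp add: euclidean_representation ac_simps)
  then show ?thesis
    using lebesgue_affine_measurable[of "\<lambda>_. s" "(1-s) *\<^sub>R x0"] assms by simp
qed

lemma hom_sets:
  fixes x0 :: "'a::euclidean_space"
  assumes "s \<noteq> 0" "S \<in> sets lebesgue" shows "hom x0 s ` S \<in> sets lebesgue"
proof -
  have "hom x0 (1/s) -` S \<in> sets lebesgue"
    using measurable_sets[OF hom_meas assms(2)] assms by simp
  then show ?thesis using hom_image_vimage[OF assms(1), of x0 S] by simp
qed

lemma hom_vimage_sets:
  fixes x0 :: "'a::euclidean_space"
  assumes "s \<noteq> 0" "S \<in> sets lebesgue" shows "hom x0 s -` S \<in> sets lebesgue"
  using measurable_sets[OF hom_meas[OF assms(1)] assms(2)] by simp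

lemma hom_measure:
  fixes x0 :: "'a::euclidean_space"
  assumes "s > 0" shows "measure lebesgue (hom x0 s ` S) = s ^ DIM('a) * measure lebesgue S"
proof -
  have "hom x0 s = (\<lambda>x. s *\<^sub>R x + (1-s) *\<^sub>R x0)" unfolding hom_def by auto
  then show ?thesis using measure_lebesgue_affine[of s "(1-s) *\<^sub>R x0" S] assms by simp
qed

lemma hom_ball:
  fixes x0 :: "'a::real_normed_vector"
  assumes "x0 \<in> ball 0 R" "0 \<le> s" "s \<le> 1"
  shows "hom x0 s ` ball 0 R \<subseteq> ball 0 R"
proof
  fix x assume "x \<in> hom x0 s ` ball 0 R"
  then obtain y where y: "y \<in> ball 0 R" "x = hom x0 s y" by auto
  show "x \<in> ball 0 R" unfolding y(2) hom_def
    by (rule convexD[OF convex_ball y(1) assms(1)]) (use assms in auto)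
qed

lemma ball_measure_pos: "R > 0 \<Longrightarrow> 0 < measure lebesgue (ball (0::'a::euclidean_space) R)"
  using content_ball_pos[of R "0::'a"] by simp

lemma count_indicator:
  fixes N :: nat shows "(\<Sum>k<N. indicator (Z k) y :: real) = real (card {k\<in>{..<N}. y \<in> Z k})"
proof -
  have "(\<Sum>k<N. indicator (Z k) y :: real) = (\<Sum>k\<in>{k\<in>{..<N}. y \<in> Z k}. 1)"
    by (rule sum.mono_neutral_cong_right) (auto simp: indicator_def)
  then show ?thesis by simp
qed

lemma shell_hits:
  fixes x0 :: "'a::euclidean_space" and E :: "'a set" and d :: nat
  assumes R: "R > 0" and x0: "x0 \<in> ball 0 R" and Em: "E \<in> sets lebesgue" and EB: "E \<subseteq> ball 0 R"
    and mu: "0 < \<mu>" and Emeas: "measure lebesgue E \<ge> \<mu> * measure lebesgue (ball (0::'a) R)"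
    and r: "0 < r" "r < 1" and cond: "real d * (1 - r ^ DIM('a)) < (3/4) * \<mu>"
  shows "\<exists>y K. finite K \<and> card K > d \<and> (\<forall>k\<in>K. hom x0 (r^k) y \<in> E)"
proof -
  define n where "n = DIM('a)"
  define B where "B = ball (0::'a) R"
  define \<beta> where "\<beta> = measure lebesgue B"
  have \<beta>: "0 < \<beta>" unfolding \<beta>_def B_def using ball_measure_pos[OF R] .
  have Bf: "B \<in> fmeasurable lebesgue" unfolding B_def by simp
  have Bs: "B \<in> sets lebesgue" using Bf by auto
  define C where "C k = hom x0 (r^k) ` B" for k
  define A where "A k = C k - C (Suc k)" for k
  define Y where "Y = B - C 1"
  define Z where "Z k = Y \<inter> hom x0 (r^k) -` E" for k
  have rk: "0 < r^k" "r^k \<le> 1" for k using r by (auto simp: power_le_one)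
  have CB: "C k \<subseteq> B" for k unfolding C_def B_def using hom_ball[OF x0 _ rk(2)] rk(1) by (simp add: less_imp_le)
  have C0: "C 0 = B" unfolding C_def by simp
  have CSuc: "C (Suc k) = hom x0 (r^k) ` C 1" for k
    unfolding C_def image_image by (simp add: hom_comp power_Suc2 mult.commute)
  have Cdec: "C (Suc k) \<subseteq> C k" for k
  proof -
    have "C (Suc k) = hom x0 (r^k) ` C 1" by (rule CSuc)
    also have "\<dots> \<subseteq> hom x0 (r^k) ` B" using CB[of 1] by (rule image_mono)
    finally show ?thesis by (simp add: C_def)
  qed
  have Cs: "C k \<in> sets lebesgue" for k unfolding C_def using hom_sets[OF _ Bs] rk(1) by (metis less_irrefl)
  have Cf: "C k \<in> fmeasurable lebesgue" for k using fmeasurableI2[OF Bf CB Cs] .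
  have Cmeas: "measure lebesgue (C k) = r^(k*n) * \<beta>" for k
    unfolding C_def \<beta>_def n_def using hom_measure[OF rk(1)] by (simp add: power_mult)
  have Ys: "Y \<in> sets lebesgue" unfolding Y_def using Bs Cs by auto
  have Yf: "Y \<in> fmeasurable lebesgue" using fmeasurableI2[OF Bf _ Ys] unfolding Y_def by auto
  have Ymeas: "measure lebesgue Y = \<beta> - r^n * \<beta>"
    unfolding Y_def \<beta>_def using measure_Diff[of lebesgue B "C 1"] Bf Cs CB Cmeas[of 1] \<beta>_def
    by (auto simp: fmeasurable_def less_top[symmetric])
  have Zs: "Z k \<in> sets lebesgue" for k
    unfolding Z_def using Ys hom_vimage_sets[OF _ Em, of "r^k" x0] rk(1) by (metis less_irrefl sets.Int)
  have Zf: "Z k \<in> fmeasurable lebesgue" for k using fmeasurableI2[OF Yf _ Zs] unfolding Z_def by auto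
  have ZE: "emeasure lebesgue (Z k) < \<infinity>" for k using Zf[of k] unfolding fmeasurable_def by blast
  have ZI: "integrable lebesgue (indicator (Z k) :: 'a \<Rightarrow> real)" for k
    by (rule integrable_real_indicator[OF Zs ZE])
  have YI: "integrable lebesgue (indicator Y :: 'a \<Rightarrow> real)"
    by (rule integrable_real_indicator[OF Ys]) (use Yf in \<open>unfold fmeasurable_def, blast\<close>)
  have ZA: "hom x0 (r^k) ` Z k = E \<inter> A k" for k
  proof -
    have inj: "inj (hom x0 (r^k))" using hom_inj rk(1) by (metis less_irrefl)
    have "hom x0 (r^k) ` Y = C k - C (Suc k)"
      unfolding Y_def image_set_diff[OF inj] CSuc by (simp add: C_def)
    moreover have "f ` (Y \<inter> f -` E) = f ` Y \<inter> E" for f :: "'a \<Rightarrow> 'a" by blast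
    ultimately show ?thesis unfolding Z_def A_def by (simp add: Int_commute)
  qed
  have EAs: "E \<inter> A k \<in> sets lebesgue" for k unfolding A_def using Em Cs by auto
  have EAf: "E \<inter> A k \<in> fmeasurable lebesgue" for k
    using fmeasurableI2[OF Bf _ EAs] CB unfolding A_def by auto
  have ZEA: "measure lebesgue (E \<inter> A k) \<le> measure lebesgue (Z k)" for k
  proof -
    have "measure lebesgue (E \<inter> A k) = (r^k)^n * measure lebesgue (Z k)"
      unfolding ZA[symmetric] n_def by (rule hom_measure[OF rk(1)])
    also have "\<dots> \<le> 1 * measure lebesgue (Z k)"
      using rk[of k] r by (intro mult_right_mono power_le_one) auto
    finally show ?thesis by simp
  qed
  have sumEq: "(\<Sum>k<N. measure lebesgue (E \<inter> A k)) = measure lebesgue (E \<inter> (B - C N))" for N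
  proof (induction N)
    case 0 then show ?case using C0 by simp
  next
    case (Suc N)
    have eq: "E \<inter> (B - C (Suc N)) = (E \<inter> (B - C N)) \<union> (E \<inter> A N)"
      unfolding A_def using Cdec[of N] CB[of N] by auto
    have "measure lebesgue (E \<inter> (B - C (Suc N))) = measure lebesgue (E \<inter> (B - C N)) + measure lebesgue (E \<inter> A N)"
      unfolding eq
    proof (rule measure_Union)
      have f: "E \<inter> (B - C N) \<in> fmeasurable lebesgue" using fmeasurableI2[OF Bf, of "E \<inter> (B - C N)"] Em Bs Cs by auto
      then show "emeasure lebesgue (E \<inter> (B - C N)) \<noteq> \<infinity>" by (auto simp: fmeasurable_def)
      show "emeasure lebesgue (E \<inter> A N) \<noteq> \<infinity>" using EAf[of N] by (auto simp: fmeasurable_def)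
      show "E \<inter> (B - C N) \<in> sets lebesgue" using f by auto
      show "E \<inter> A N \<in> sets lebesgue" by (rule EAs)
      show "E \<inter> (B - C N) \<inter> (E \<inter> A N) = {}" unfolding A_def by auto
    qed
    then show ?case using Suc by simp
  qed
  obtain N where N: "(r^n)^N < \<mu>/4"
    using real_arch_pow_inv[of "\<mu>/4" "r^n"] mu r by (auto simp: n_def power_less_one_iff)
  have sumZ: "(3/4) * \<mu> * \<beta> \<le> (\<Sum>k<N. measure lebesgue (Z k))"
  proof -
    have "E \<subseteq> (E \<inter> (B - C N)) \<union> C N" using EB unfolding B_def by auto
    then have "measure lebesgue E \<le> measure lebesgue ((E \<inter> (B - C N)) \<union> C N)"
      by (intro measure_mono_fmeasurable) (use Em Bs Cs Cf fmeasurableI2[OF Bf, of "E \<inter> (B - C N)"] in auto)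
    also have "\<dots> \<le> measure lebesgue (E \<inter> (B - C N)) + measure lebesgue (C N)"
      by (rule measure_Un_le) (use Em Bs Cs in auto)
    finally have "measure lebesgue E - r^(N*n) * \<beta> \<le> measure lebesgue (E \<inter> (B - C N))"
      using Cmeas[of N] by simp
    moreover have "r^(N*n) * \<beta> \<le> (\<mu>/4) * \<beta>"
      using N \<beta> by (intro mult_right_mono) (auto simp: power_mult mult.commute[of N n])
    moreover have "\<mu> * \<beta> \<le> measure lebesgue E" using Emeas unfolding \<beta>_def B_def .
    ultimately have "(3/4) * \<mu> * \<beta> \<le> (\<Sum>k<N. measure lebesgue (E \<inter> A k))"
      unfolding sumEq by linarith
    also have "\<dots> \<le> (\<Sum>k<N. measure lebesgue (Z k))" by (intro sum_mono ZEA)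
    finally show ?thesis .
  qed
  have "\<exists>y\<in>Y. card {k\<in>{..<N}. y \<in> Z k} > d"
  proof (rule ccontr)
    assume "\<not> ?thesis"
    then have cnt: "card {k\<in>{..<N}. y \<in> Z k} \<le> d" if "y \<in> Y" for y using that by auto
    have "(\<Sum>k<N. measure lebesgue (Z k)) = (\<Sum>k<N. integral\<^sup>L lebesgue (indicator (Z k) :: 'a \<Rightarrow> real))"
      by simp
    also have "\<dots> = integral\<^sup>L lebesgue (\<lambda>y. \<Sum>k<N. indicator (Z k) y :: real)"
      by (rule Bochner_Integration.integral_sum[symmetric])
 (rule ZI)
    also have "\<dots> \<le> integral\<^sup>L lebesgue (\<lambda>y. real d * indicator Y y)"
    proof (rule integral_mono)
      show "integrable lebesgue (\<lambda>y. \<Sum>k<N. indicator (Z k) y :: real)"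
        using ZI by (intro Bochner_Integration.integrable_sum) auto
      show "integrable lebesgue (\<lambda>y. real d * indicator Y y)"
        using YI by (intro integrable_mult_right)
      fix y
      show "(\<Sum>k<N. indicator (Z k) y :: real) \<le> real d * indicator Y y"
      proof (cases "y \<in> Y")
        case True
        then show ?thesis using cnt[OF True] unfolding count_indicator by simp
      next
        case False
        then have "y \<notin> Z k" for k unfolding Z_def by auto
        then show ?thesis using False by simp
      qed
    qed
    also have "\<dots> = real d * measure lebesgue Y" by simp
    also have "\<dots> = real d * (1 - r^n) * \<beta>" unfolding Ymeas by (simp add: algebra_simps)
    also have "\<dots> < (3/4) * \<mu> * \<beta>" using cond \<beta> unfolding n_def by (intro mult_strict_right_mono) auto
    finally show False using sumZ by linarith
  qed
  then obtain y where y: "y \<in> Y" "card {k\<in>{..<N}. y \<in> Z k} > d" by blast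
  show ?thesis
    by (rule exI[of _ y], rule exI[of _ "{k\<in>{..<N}. y \<in> Z k}"]) (use y in \<open>auto simp: Z_def\<close>)
qed

lemma remez_point:
  fixes c :: "('n::finite \<Rightarrow> nat) \<Rightarrow> complex" and x0 :: "real^'n" and E :: "(real^'n) set" and d :: nat
  assumes R: "R > 0" and x0: "x0 \<in> ball 0 R" and Em: "E \<in> sets lebesgue" and EB: "E \<subseteq> ball 0 R"
    and mu: "0 < \<mu>" "\<mu> \<le> 1" and Emeas: "measure lebesgue E \<ge> \<mu> * measure lebesgue (ball (0::real^'n) R)"
    and fin: "finite (mpoly_support c)" and degc: "\<And>\<alpha>. \<alpha> \<in> mpoly_support c \<Longrightarrow> (\<Sum>i\<in>UNIV. \<alpha> i) \<le> d"
    and bnd: "\<And>x. x \<in> E \<Longrightarrow> cmod (mpoly_eval c x) \<le> T"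
  shows "cmod (mpoly_eval c x0) \<le> T * (15 * real CARD('n) / \<mu>)^d"
proof -
  define n where "n = CARD('n)"
  have n1: "1 \<le> real n" unfolding n_def by simp
  define \<eta> where "\<eta> = 2*\<mu>/(3*real n*(real d+1))"
  have npos: "0 < real n" using n1 by simp
  have den: "0 < 3 * real n * (real d + 1)" using npos by (intro mult_pos_pos) auto
  have eta0: "0 < \<eta>" unfolding \<eta>_def using mu den by (intro divide_pos_pos) simp_all
  have etad: "real d * \<eta> \<le> 2/3"
  proof -
    have "real d * \<eta> = (2/3) * (\<mu> / n) * (d / (d+1))" unfolding \<eta>_def by (simp add: field_simps)
    also have "\<dots> \<le> (2/3) * 1 * 1"
      using mu n1 by (intro mult_mono) (auto simp: field_simps)
    finally show ?thesis by simp
  qed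
  have eta1: "\<eta> \<le> 2/3"
  proof -
    have "\<eta> = (2/3) * (\<mu> / n) * (1 / (d+1))" unfolding \<eta>_def by (simp add: field_simps)
    also have "\<dots> \<le> (2/3) * 1 * 1"
      using mu n1 by (intro mult_mono) (auto simp: field_simps)
    finally show ?thesis by simp
  qed
  define r where "r = 1 - \<eta>"
  have r: "0 < r" "r < 1" unfolding r_def using eta0 eta1 by auto
  have cond: "real d * (1 - r ^ DIM(real^'n)) < (3/4) * \<mu>"
  proof -
    have "1 + real n * (-\<eta>) \<le> (1 + (-\<eta>))^n" using eta1 by (intro Bernoulli_inequality) auto
    then have "1 - r^n \<le> n * \<eta>" unfolding r_def by simp
    then have "real d * (1 - r^n) \<le> real d * (n * \<eta>)" by (intro mult_left_mono) auto
    also have "\<dots> = (2/3) * \<mu> * (d/(d+1))"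
    proof -
      have "real n * \<eta> = (real n * (2*\<mu>))/(real n * (3*(real d+1)))" unfolding \<eta>_def by (simp add: mult_ac)
      also have "\<dots> = 2*\<mu>/(3*(real d+1))" using npos by (rule nonzero_mult_divide_mult_cancel_left[OF less_imp_neq[symmetric]])
      finally have ne: "real n * \<eta> = 2*\<mu>/(3*(real d+1))" .
      have dd: "real d + 1 \<noteq> 0" by simp
      show ?thesis unfolding ne using dd by (simp add: field_simps)
    qed
    also have "\<dots> \<le> (2/3) * \<mu> * 1" using mu by (intro mult_left_mono) auto
    also have "\<dots> < (3/4) * \<mu>" using mu by simp
    finally show ?thesis unfolding n_def by simp
  qed
  obtain y K where K: "finite K" "card K > d" "\<And>k. k \<in> K \<Longrightarrow> hom x0 (r^k) y \<in> E"
    using shell_hits[OF R x0 Em EB mu(1) Emeas r cond] by blast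
  obtain l where l: "sorted_wrt (<) l" "set l = K" "length l = card K"
    using finite_set_strict_sorted[OF K(1)] by blast
  define kk where "kk i = l ! i" for i
  have kkK: "kk i \<in> K" if "i \<le> d" for i using l K(2) that unfolding kk_def by (metis nth_mem le_less_trans)
  have kmono: "kk i < kk j" if "i < j" "j \<le> d" for i j
    unfolding kk_def using sorted_wrt_nth_less[OF l(1) that(1)] that l(3) K(2) by linarith
  obtain q where q: "degree q \<le> d" "\<And>s::real. poly q (of_real s) = mpoly_eval c (x0 + s *\<^sub>R (y - x0))"
    using restrict_poly[OF fin degc, of x0 "y - x0"] by blast
  have qb: "cmod (poly q (of_real ((1-\<eta>)^(kk i)))) \<le> T" if "i \<le> d" for i
  proof -
    have "poly q (of_real ((1-\<eta>)^(kk i))) = mpoly_eval c (hom x0 (r^(kk i)) y)"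
      unfolding q(2) hom_alt r_def ..
    then show ?thesis using bnd K(3)[OF kkK[OF that]] by simp
  qed
  have T0: "0 \<le> T" using qb[of 0] by (meson norm_ge_zero order_trans le0)
  have "cmod (poly q 0) \<le> T * (10/(3*\<eta>))^d / fact d"
    by (rule lagrange_bound[OF q(1) eta0 eta1 etad kmono qb]) auto
  moreover have "poly q 0 = mpoly_eval c x0" using q(2)[of 0] by simp
  moreover have "(10/(3*\<eta>))^d / fact d \<le> (15 * real n / \<mu>)^d"
  proof -
    have "10/(3*\<eta>) = (5 * n / \<mu>) * (d+1)" unfolding \<eta>_def using mu n1 by (simp add: field_simps)
    then have "(10/(3*\<eta>))^d = (5 * n / \<mu>)^d * (d+1)^d" by (simp only: power_mult_distrib of_nat_power)
    also have "\<dots> \<le> (5 * n / \<mu>)^d * (3^d * fact d)"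
      using pow_fact[of d] mu by (intro mult_left_mono) auto
    finally have "(10/(3*\<eta>))^d / fact d \<le> (5 * n / \<mu>)^d * 3^d"
      by (simp add: divide_le_eq)
    also have "\<dots> = (15 * real n / \<mu>)^d" by (simp add: power_mult_distrib[symmetric])
    finally show ?thesis .
  qed
  ultimately show ?thesis using T0 unfolding n_def
    by (metis (no_types, lifting) mult_left_mono order_trans times_divide_eq_right)
qed

lemma mpoly_cont: "continuous_on UNIV (mpoly_eval (c :: ('n::finite \<Rightarrow> nat) \<Rightarrow> complex))"
  unfolding mpoly_eval_def by (intro continuous_intros)

lemma cont_set_integrable:
  fixes g :: "real^'n \<Rightarrow> real"
  assumes g: "continuous_on UNIV g" and S: "S \<in> sets lebesgue" "S \<subseteq> cball 0 R"
  shows "set_integrable lebesgue S g"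
proof -
  have "integrable lborel (\<lambda>x. indicator (cball 0 R) x *\<^sub>R g x)"
    by (rule borel_integrable_compact) (auto intro: continuous_on_subset[OF g])
  moreover have "(\<lambda>x. indicator (cball (0::real^'n) R) x *\<^sub>R g x) \<in> lborel \<rightarrow>\<^sub>M borel"
  proof -
    have "g \<in> borel_measurable lborel" using borel_measurable_continuous_onI[OF g] by simp
    moreover have "cball (0::real^'n) R \<in> sets lborel" by simp
    ultimately show ?thesis by (intro borel_measurable_scaleR borel_measurable_indicator)
  qed
  ultimately have "integrable lebesgue (\<lambda>x. indicator (cball 0 R) x *\<^sub>R g x)"
    by (simp add: integrable_completion)
  then have "set_integrable lebesgue (cball 0 R) g" unfolding set_integrable_def .
  then show ?thesis by (rule set_integrable_subset[OF _ S])
qed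

lemma cont_le_sets:
  fixes g :: "real^'n \<Rightarrow> real"
  assumes g: "continuous_on UNIV g" and A: "A \<in> sets lebesgue"
  shows "{x\<in>A. g x \<le> c} \<in> sets lebesgue"
proof -
  have "closed (g -` {..c})" by (rule continuous_closed_vimage[OF closed_atMost]) (use g in \<open>auto simp: continuous_on_eq_continuous_at\<close>)
  then have "g -` {..c} \<in> sets lebesgue" by (auto intro: sets_completionI_sets)
  moreover have "{x\<in>A. g x \<le> c} = A \<inter> g -` {..c}" by auto
  ultimately show ?thesis using A by auto
qed

lemma rho_bound:
  fixes a :: real and n :: nat
  assumes a: "0 < a" "a \<le> 1/4" and n: "1 \<le> n"
  defines "t \<equiv> (1 - a) powr (1 / real n)"
  shows "0 < 1 - t" "5 * real n / (4 * a) \<le> (1 + t) / (1 - t)"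
proof -
  have t0: "0 < t" unfolding t_def using a by simp
  have tn: "t ^ n = 1 - a"
  proof -
    have "t ^ n = t powr (real n)" using t0 by (simp add: powr_realpow)
    also have "\<dots> = (1 - a) powr (1 / real n * real n)" unfolding t_def by (simp add: powr_powr)
    also have "\<dots> = 1 - a" using n a by simp
    finally show ?thesis .
  qed
  have t1: "t < 1"
  proof (rule ccontr)
    assume "\<not> t < 1"
    then have "1 \<le> t ^ n" by (simp add: one_le_power)
    then show False using tn a by simp
  qed
  then show "0 < 1 - t" by simp
  have ta: "1 - a \<le> t"
  proof (rule ccontr)
    assume "\<not> 1 - a \<le> t"
    moreover have "t ^ n \<le> t ^ 1" using t0 t1 n by (intro power_decreasing) auto
    ultimately show False using tn by simp
  qed
  define u where "u = 1 - t"
  have u: "0 < u" "u < 1" unfolding u_def using t0 t1 by auto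
  have b: "1 + real n * u \<le> (1 + u) ^ n" using u by (intro Bernoulli_inequality) auto
  have "(1 - a) * (1 + u) ^ n = ((1 - u) * (1 + u)) ^ n" unfolding tn[symmetric] u_def by (simp add: power_mult_distrib)
  also have "\<dots> \<le> 1" using u by (intro power_le_one) (auto simp: algebra_simps mult_le_one)
  finally have "(1 - a) * (1 + real n * u) \<le> 1"
    using mult_left_mono[OF b, of "1 - a"] a by linarith
  then have "(1 - a) * (real n * u) \<le> a" by (simp add: algebra_simps)
  moreover have "(3/4) * (real n * u) \<le> (1 - a) * (real n * u)"
    using a u by (intro mult_right_mono) auto
  ultimately have nu: "real n * u \<le> (4/3) * a" by linarith
  have n0: "0 < real n" using n by simp
  have "5 * real n / (4 * a) \<le> (7/4) / u"
  proof -
    have le: "5 * (real n * u) \<le> 7 * a" using nu a by linarith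
    have e1: "5 * real n / (4 * a) = (5 * (real n * u)) / (4 * a * u)" using a u by (simp add: field_simps)
    have e2: "(7/4)/u = (7 * a) / (4 * a * u)" using a u by (simp add: field_simps)
    show ?thesis unfolding e1 e2 using a u le by (intro divide_right_mono) auto
  qed
  also have "\<dots> \<le> (1 + t) / u" using ta a u by (intro divide_right_mono) auto
  finally show "5 * real n / (4 * a) \<le> (1 + t) / (1 - t)" unfolding u_def .
qed

theorem mainTheorem13:
  fixes \<omega> :: "(real^'n) set" and R :: real and c :: "('n \<Rightarrow> nat) \<Rightarrow> complex" and d :: nat
  assumes "R > 0"
    and "\<omega> \<in> sets lebesgue"
    and "measure lebesgue (\<omega> \<inter> ball 0 R) > 0"
    and "finite (mpoly_support c)" and "mpoly_support c \<noteq> {}"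
    and "mpoly_degree c = d"
  shows "L2_norm_on (ball 0 R) (mpoly_eval c)
    \<le> 2 ^ (2 * d + 1) / sqrt 3
       * sqrt (4 * measure lebesgue (ball (0::real^'n) R) / measure lebesgue (\<omega> \<inter> ball 0 R))
       * ((1 + (1 - measure lebesgue (\<omega> \<inter> ball 0 R) / (4 * measure lebesgue (ball (0::real^'n) R))) powr (1 / real CARD('n)))
          / (1 - (1 - measure lebesgue (\<omega> \<inter> ball 0 R) / (4 * measure lebesgue (ball (0::real^'n) R))) powr (1 / real CARD('n)))) ^ d
       * L2_norm_on (\<omega> \<inter> ball 0 R) (mpoly_eval c)"
proof -
  note R = assms(1) and \<omega>m = assms(2) and fin = assms(4)
  define B where "B = ball (0::real^'n) R"
  define A where "A = \<omega> \<inter> B"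
  define \<beta> where "\<beta> = measure lebesgue B"
  define \<alpha> where "\<alpha> = measure lebesgue A"
  define n where "n = CARD('n)"
  define P where "P = mpoly_eval c"
  define g where "g x = (cmod (P x))\<^sup>2" for x
  define S where "S = (LINT x:A|lebesgue. g x)"
  define a where "a = \<alpha> / (4 * \<beta>)"
  define t where "t = (1 - a) powr (1 / real n)"
  define M where "M = (20 * real n * \<beta> / \<alpha>) ^ d"
  have \<alpha>0: "0 < \<alpha>" unfolding \<alpha>_def A_def B_def using assms(3) .
  have \<beta>0: "0 < \<beta>" unfolding \<beta>_def B_def using ball_measure_pos[OF R] .
  have Bf: "B \<in> fmeasurable lebesgue" unfolding B_def by simp
  have Bs: "B \<in> sets lebesgue" using Bf by auto
  have As: "A \<in> sets lebesgue" unfolding A_def using \<omega>m Bs by auto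
  have AB: "A \<subseteq> B" unfolding A_def by auto
  have Af: "A \<in> fmeasurable lebesgue" using fmeasurableI2[OF Bf AB As] .
  have \<alpha>\<beta>: "\<alpha> \<le> \<beta>" unfolding \<alpha>_def \<beta>_def using measure_mono_fmeasurable[OF AB As Bf] .
  have n1: "1 \<le> n" unfolding n_def by simp
  have gcont: "continuous_on UNIV g" unfolding g_def P_def
    by (intro continuous_intros mpoly_cont)
  have g0: "0 \<le> g x" for x unfolding g_def by simp
  have Bc: "B \<subseteq> cball 0 R" unfolding B_def by auto
  have gA: "set_integrable lebesgue A g" using cont_set_integrable[OF gcont As] AB Bc by blast
  have gB: "set_integrable lebesgue B g" using cont_set_integrable[OF gcont Bs Bc] .
  have S0: "0 \<le> S" unfolding S_def set_lebesgue_integral_def by (rule Bochner_Integration.integral_nonneg) (simp add: g0)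
  have degc: "(\<Sum>i\<in>UNIV. \<alpha>' i) \<le> d" if "\<alpha>' \<in> mpoly_support c" for \<alpha>'
    using assms(6) that fin unfolding mpoly_degree_def by (metis Max_ge finite_imageI imageI)
  have M0: "0 < M" unfolding M_def using n1 \<alpha>0 \<beta>0 by simp
  have pw: "g x0 \<le> M\<^sup>2 * (4 * S / \<alpha>)" if x0: "x0 \<in> B" for x0
  proof -
    have "g x0 / M\<^sup>2 \<le> 4 * S / \<alpha>"
    proof (rule dense_ge)
      fix cc assume cc: "4 * S / \<alpha> < cc"
      have cc0: "0 < cc" using cc S0 \<alpha>0 by (smt (verit) divide_nonneg_pos)
      define Ec where "Ec = {x\<in>A. g x \<le> cc}"
      have Ecs: "Ec \<in> sets lebesgue" unfolding Ec_def by (rule cont_le_sets[OF gcont As])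
      have EcB: "Ec \<subseteq> B" unfolding Ec_def using AB by auto
      have mk: "measure lebesgue {x\<in>A. cc \<le> g x} \<le> S / cc"
        unfolding S_def by (rule integral_Markov_inequality'_measure[OF gA As _ cc0]) (use g0 in auto)
      have Ges: "{x\<in>A. cc \<le> g x} \<in> sets lebesgue"
      proof -
        have "{x\<in>A. cc \<le> g x} = A - {x\<in>A. g x < cc}" by auto
        moreover have "{x\<in>A. g x < cc} \<in> sets lebesgue"
        proof -
          have "open (g -` {..<cc})" by (rule continuous_open_vimage[OF open_lessThan]) (use gcont in \<open>auto simp: continuous_on_eq_continuous_at\<close>)
          then have "g -` {..<cc} \<in> sets lebesgue" by (auto intro: sets_completionI_sets)
          moreover have "{x\<in>A. g x < cc} = A \<inter> g -` {..<cc}" by auto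
          ultimately show ?thesis using As by auto
        qed
        ultimately show ?thesis using As by auto
      qed
      have "\<alpha> \<le> measure lebesgue (Ec \<union> {x\<in>A. cc \<le> g x})"
        unfolding \<alpha>_def
        by (rule measure_mono_fmeasurable) (use Ecs Ges Bf EcB AB As in \<open>auto simp: Ec_def intro: fmeasurableI2[OF Bf]\<close>)
      also have "\<dots> \<le> measure lebesgue Ec + measure lebesgue {x\<in>A. cc \<le> g x}"
        by (rule measure_Un_le[OF Ecs Ges])
      finally have "\<alpha> - S / cc \<le> measure lebesgue Ec" using mk by linarith
      moreover have "S / cc < \<alpha> / 4"
      proof -
        have "S < \<alpha> / 4 * cc" using cc \<alpha>0 by (simp add: field_simps)
        then show ?thesis using cc0 by (simp add: field_simps)
      qed
      ultimately have Ecm: "(3 * \<alpha> / (4 * \<beta>)) * \<beta> \<le> measure lebesgue Ec" using \<beta>0 by simp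
      have mu: "0 < 3 * \<alpha> / (4 * \<beta>)" "3 * \<alpha> / (4 * \<beta>) \<le> 1" using \<alpha>0 \<beta>0 \<alpha>\<beta> by (auto simp: field_simps)
      have bnd: "cmod (mpoly_eval c x) \<le> sqrt cc" if "x \<in> Ec" for x
      proof -
        have "(cmod (mpoly_eval c x))\<^sup>2 \<le> cc" using that unfolding Ec_def g_def P_def by auto
        then show ?thesis by (simp add: real_le_rsqrt)
      qed
      have "cmod (mpoly_eval c x0) \<le> sqrt cc * (15 * real CARD('n) / (3 * \<alpha> / (4 * \<beta>)))^d"
        by (rule remez_point[OF R _ Ecs _ mu _ fin degc bnd]) (use x0 EcB Ecm in \<open>auto simp: B_def \<beta>_def\<close>)
      also have "(15 * real CARD('n) / (3 * \<alpha> / (4 * \<beta>)))^d = M"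
        unfolding M_def n_def using \<alpha>0 \<beta>0 by (simp add: field_simps)
      finally have "cmod (P x0) \<le> sqrt cc * M" unfolding P_def by simp
      then have "g x0 \<le> (sqrt cc * M)\<^sup>2" unfolding g_def by (intro power_mono) auto
      also have "\<dots> = cc * M\<^sup>2" using cc0 by (simp add: power_mult_distrib)
      finally show "g x0 / M\<^sup>2 \<le> cc" using M0 by (simp add: divide_le_eq)
    qed
    then show ?thesis using M0 by (simp add: divide_le_eq mult.commute)
  qed
  have IB: "(LINT x:B|lebesgue. g x) \<le> \<beta> * (M\<^sup>2 * (4 * S / \<alpha>))"
  proof -
    have "(LINT x:B|lebesgue. g x) \<le> (LINT x:B|lebesgue. M\<^sup>2 * (4 * S / \<alpha>))"
      by (rule set_integral_mono[OF gB _ pw]) (use Bs Bf in \<open>auto simp: set_integrable_def fmeasurable_def intro!: integrable_real_mult_indicator\<close>)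
    also have "\<dots> = \<beta> * (M\<^sup>2 * (4 * S / \<alpha>))"
      unfolding \<beta>_def using Bs Bf by (subst set_integral_const) (auto simp: fmeasurable_def)
    finally show ?thesis .
  qed
  have L2B: "L2_norm_on B P \<le> sqrt (4 * \<beta> / \<alpha>) * M * sqrt S"
  proof -
    have "L2_norm_on B P = sqrt (LINT x:B|lebesgue. g x)" unfolding L2_norm_on_def g_def ..
    also have "\<dots> \<le> sqrt (\<beta> * (M\<^sup>2 * (4 * S / \<alpha>)))" using IB by simp
    also have "\<beta> * (M\<^sup>2 * (4 * S / \<alpha>)) = (sqrt (4 * \<beta> / \<alpha>) * M * sqrt S)\<^sup>2"
      using \<alpha>0 \<beta>0 S0 by (simp add: power_mult_distrib)
    also have "sqrt \<dots> = sqrt (4 * \<beta> / \<alpha>) * M * sqrt S" using M0 \<alpha>0 \<beta>0 S0 by simp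
    finally show ?thesis .
  qed
  have a: "0 < a" "a \<le> 1/4" unfolding a_def using \<alpha>0 \<beta>0 \<alpha>\<beta> by (auto simp: field_simps)
  have rb: "0 < 1 - t" "5 * real n / (4 * a) \<le> (1 + t) / (1 - t)"
    using rho_bound[OF a n1] unfolding t_def by auto
  have Mb: "M \<le> 2 ^ (2 * d + 1) / sqrt 3 * ((1 + t) / (1 - t)) ^ d"
  proof -
    have "20 * real n * \<beta> / \<alpha> = 4 * (5 * real n / (4 * a))" unfolding a_def using \<alpha>0 \<beta>0 by (simp add: field_simps)
    also have "\<dots> \<le> 4 * ((1 + t) / (1 - t))" by (intro mult_left_mono rb(2)) simp
    finally have "M \<le> (4 * ((1 + t) / (1 - t))) ^ d" unfolding M_def using \<alpha>0 \<beta>0 n1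
      by (intro power_mono) auto
    also have "\<dots> = 2 ^ (2 * d) * ((1 + t) / (1 - t)) ^ d" by (simp only: power_mult_distrib) (simp add: power_mult)
    also have "\<dots> \<le> 2 ^ (2 * d + 1) / sqrt 3 * ((1 + t) / (1 - t)) ^ d"
    proof (rule mult_right_mono)
      have "sqrt 3 \<le> 2" by (rule real_le_lsqrt) auto
      then have "2 ^ (2 * d) * sqrt 3 \<le> 2 ^ (2 * d) * 2" by (intro mult_left_mono) auto
      then show "2 ^ (2 * d) \<le> 2 ^ (2 * d + 1) / sqrt 3" by (simp add: le_divide_eq)
      have "0 \<le> (1 + t) / (1 - t)" using rb a n1 by (smt (verit) divide_nonneg_pos of_nat_0_le_iff divide_pos_pos)
      then show "0 \<le> ((1 + t) / (1 - t)) ^ d" by simp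
    qed
    finally show ?thesis .
  qed
  have "L2_norm_on B P \<le> sqrt (4 * \<beta> / \<alpha>) * M * sqrt S" by (rule L2B)
  also have "\<dots> \<le> sqrt (4 * \<beta> / \<alpha>) * (2 ^ (2 * d + 1) / sqrt 3 * ((1 + t) / (1 - t)) ^ d) * sqrt S"
    using \<alpha>0 \<beta>0 S0 by (intro mult_right_mono mult_left_mono Mb) auto
  also have "sqrt S = L2_norm_on A P" unfolding L2_norm_on_def S_def g_def ..
  finally show ?thesis unfolding B_def A_def \<beta>_def \<alpha>_def a_def t_def n_def P_def
    by (simp add: mult_ac)
qed

end
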